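(* Fix a real number $\beta>-1$. Let $\phi$ be an analytic self-map of $\mathbb{D}$ whose Denjoy–Wolff point lies on the unit circle $\mathbb{T}$. Then $C_\phi-I$ has dense range in $A^2_\beta$, where $C_\phi f=f\circ\phi$.
   Context: $\mathbb{D}$ is the open unit disc and $\mathbb{T}$ the unit circle. For $\beta>-1$, $A^2_\beta$ is the Hilbert space of analytic functions $f(z)=\sum_{n\ge0}\widehat f(n)z^n$ on $\mathbb{D}$ with inner product $\langle f,g\rangle=\sum_{n\ge0}\frac{n!\,\Gamma(2+\beta)}{\Gamma(n+2+\beta)}\widehat f(n)\overline{\widehat g(n)}$ (equivalently the $L^2$ inner product with respect to $(\beta+1)(1-|z|^2)^\beta dA(z)$); composition operators $C_\phi$ are bounded on it. If an analytic self-map $\phi$ of $\mathbb{D}$ is not an elliptic automorphism (an automorphism of $\mathbb{D}$ with a fixed point in $\mathbb{D}$), there is a unique $\omega\in\overline{\mathbb{D}}$ with $\lim_{n\to\infty}\phi^{[n]}(z)=\omega$ for all $z\in\mathbb{D}$ ($\phi^{[n]}$ the $n$-th iterate), called the Denjoy–Wolff point of $\phi$. *)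

theory Defs
  imports "HOL-Complex_Analysis.Complex_Analysis"
begin

definition taylor_coeff :: "(complex \<Rightarrow> complex) \<Rightarrow> nat \<Rightarrow> complex" where
  "taylor_coeff f n = (deriv ^^ n) f 0 / of_nat (fact n)"

definition bergman_weight :: "real \<Rightarrow> nat \<Rightarrow> real" where
  "bergman_weight \<beta> n = fact n * Gamma (2 + \<beta>) / Gamma (real n + 2 + \<beta>)"

definition bergman_norm2 :: "real \<Rightarrow> (complex \<Rightarrow> complex) \<Rightarrow> real" where
  "bergman_norm2 \<beta> f = (\<Sum>n. bergman_weight \<beta> n * (cmod (taylor_coeff f n))\<^sup>2)"

definition bergman_space :: "real \<Rightarrow> (complex \<Rightarrow> complex) set" where
  "bergman_space \<beta> = {f. f holomorphic_on ball 0 1 \<and>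
      summable (\<lambda>n. bergman_weight \<beta> n * (cmod (taylor_coeff f n))\<^sup>2)}"

definition denjoy_wolff_point :: "(complex \<Rightarrow> complex) \<Rightarrow> complex \<Rightarrow> bool" where
  "denjoy_wolff_point \<phi> \<omega> \<longleftrightarrow> cmod \<omega> \<le> 1 \<and>
      (\<forall>z\<in>ball 0 1. (\<lambda>n. (\<phi> ^^ n) z) \<longlonglongrightarrow> \<omega>)"

end

theory Submission
  imports Defs "HOL-Real_Asymp.Real_Asymp"
begin

lemma tc_power: "taylor_coeff (\<lambda>z. z^k) n = (if n = k then 1 else 0)"
proof -
  have "(deriv ^^ n) (\<lambda>w. (w-0)^k) 0 = pochhammer (of_nat (Suc k - n)) n * (0-0)^(k-n)"
    by (rule higher_deriv_power)
  then show ?thesis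
    by (auto simp: taylor_coeff_def pochhammer_fact[symmetric] pochhammer_0_left)
qed

lemma tc_const: "taylor_coeff (\<lambda>z. c) n = (if n = 0 then c else 0)"
  by (simp add: taylor_coeff_def)

lemma tc_add: assumes "f holomorphic_on ball 0 1" "g holomorphic_on ball 0 1"
  shows "taylor_coeff (\<lambda>z. f z + g z) n = taylor_coeff f n + taylor_coeff g n"
  using higher_deriv_add[OF assms, of 0 n] by (simp add: taylor_coeff_def add_divide_distrib)

lemma tc_diff: assumes "f holomorphic_on ball 0 1" "g holomorphic_on ball 0 1"
  shows "taylor_coeff (\<lambda>z. f z - g z) n = taylor_coeff f n - taylor_coeff g n"
  using higher_deriv_diff[OF assms, of 0 n] by (simp add: taylor_coeff_def diff_divide_distrib)

lemma tc_cmult: assumes "f holomorphic_on ball 0 1"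
  shows "taylor_coeff (\<lambda>z. c * f z) n = c * taylor_coeff f n"
  using higher_deriv_cmult[OF assms, of 0 n c] by (simp add: taylor_coeff_def)

lemma tc_cong: assumes "\<And>z. z \<in> ball 0 1 \<Longrightarrow> f z = g z"
  shows "taylor_coeff f n = taylor_coeff g n"
proof -
  have "eventually (\<lambda>x. f x = g x) (nhds 0)"
    using eventually_nhds_in_open[of "ball (0::complex) 1" 0] assms
    by (auto elim!: eventually_mono)
  then show ?thesis unfolding taylor_coeff_def
    using higher_deriv_cong_ev by (metis)
qed

lemma tc_sum: assumes "finite I" "\<And>i. i \<in> I \<Longrightarrow> f i holomorphic_on ball 0 1"
  shows "taylor_coeff (\<lambda>z. \<Sum>i\<in>I. f i z) n = (\<Sum>i\<in>I. taylor_coeff (f i) n)"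
  using assms
proof (induction I rule: finite_induct)
  case empty then show ?case by (simp add: tc_const)
next
  case (insert x F)
  have "taylor_coeff (\<lambda>z. \<Sum>i\<in>insert x F. f i z) n = taylor_coeff (\<lambda>z. f x z + (\<Sum>i\<in>F. f i z)) n"
    using insert by simp
  also have "\<dots> = taylor_coeff (f x) n + taylor_coeff (\<lambda>z. \<Sum>i\<in>F. f i z) n"
    using insert by (intro tc_add) (auto intro!: holomorphic_intros)
  finally show ?case using insert by simp
qed

lemma tc_series: assumes "f holomorphic_on ball 0 1" "z \<in> ball 0 1"
  shows "(\<lambda>n. taylor_coeff f n * z^n) sums f z"
  using holomorphic_power_series[OF assms] by (simp add: taylor_coeff_def)

definition ru :: "nat \<Rightarrow> nat \<Rightarrow> nat \<Rightarrow> complex" where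
  "ru N j m = exp (2 * of_real pi * \<i> * of_nat j * of_nat m / of_nat N)"

lemma ru_orth: assumes "N > 0" "m < N" "l < N"
  shows "(\<Sum>j<N. ru N j m * cnj (ru N j l)) = (if m = l then of_nat N else 0)"
proof -
  define x where "x = exp (2 * of_real pi * \<i> * (of_int (int m - int l)) / of_nat N)"
  have t: "ru N j m * cnj (ru N j l) = x ^ j" for j
  proof -
    have "ru N j m * cnj (ru N j l) = exp (2 * of_real pi * \<i> * of_nat j * of_nat m / of_nat N
        + cnj (2 * of_real pi * \<i> * of_nat j * of_nat l / of_nat N))"
      unfolding ru_def exp_cnj exp_add by simp
    also have "\<dots> = exp (of_nat j * (2 * of_real pi * \<i> * (of_int (int m - int l)) / of_nat N))"
      using assms by (intro arg_cong[where f=exp]) (simp add: field_simps)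
    also have "\<dots> = x ^ j" unfolding x_def by (rule exp_of_nat_mult)
    finally show ?thesis .
  qed
  show ?thesis
  proof (cases "m = l")
    case True
    then have "x = 1" unfolding x_def by simp
    then show ?thesis using True t by simp
  next
    case False
    have xN: "x ^ N = 1"
    proof -
      have "x ^ N = exp (of_nat N * (2 * of_real pi * \<i> * (of_int (int m - int l)) / of_nat N))"
        unfolding x_def by (rule exp_of_nat_mult[symmetric])
      also have "\<dots> = exp (2 * of_real pi * \<i> * (of_int (int m - int l)))"
        using assms by simp
      also have "\<dots> = 1" unfolding exp_eq_1
        by (intro conjI exI[of _ "int m - int l"]) simp_all
      finally show ?thesis .
    qed
    have x1: "x \<noteq> 1"
    proof
      assume "x = 1"
      then obtain k :: int where k: "Im (2 * of_real pi * \<i> * (of_int (int m - int l)) / of_nat N) = of_int (2 * k) * pi"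
        unfolding x_def exp_eq_1 by blast
      then have "2 * pi * (real_of_int (int m - int l)) / real N = of_int (2 * k) * pi"
        by simp
      then have "pi * (2 * real_of_int (int m - int l)) = pi * (2 * real_of_int (k * int N))" using assms
        by (simp add: field_simps)
      then have "real_of_int (int m - int l) = real_of_int (k * int N)"
        by simp
      then have "int m - int l = k * int N" by linarith
      then show False using assms False
      proof (cases "k = 0")
        case True then show False using \<open>int m - int l = k * int N\<close> False by simp
      next
        case False
        then have "\<bar>k\<bar> \<ge> 1" by linarith
        then have "\<bar>k * int N\<bar> \<ge> int N"
          using mult_right_mono[of 1 "\<bar>k\<bar>" "int N"] by (simp add: abs_mult)
        then show ?thesis using \<open>int m - int l = k * int N\<close> assms by linarith
      qed
    qed
    have "(\<Sum>j<N. ru N j m * cnj (ru N j l)) = (\<Sum>j<N. x ^ j)" using t by simp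
    also have "\<dots> = 0" using geometric_sum[OF x1, of N] xN by simp
    finally show ?thesis using False by simp
  qed
qed

lemma ru_norm [simp]: "cmod (ru N j m) = 1"
  unfolding ru_def by (simp add: norm_exp_eq_Re)

lemma coeff_bound:
  assumes holf: "f holomorphic_on ball 0 1" and bd: "\<And>z. z \<in> ball 0 1 \<Longrightarrow> cmod (f z) \<le> M"
  shows "cmod (taylor_coeff f n) \<le> M"
proof -
  have le: "cmod (taylor_coeff f n) \<le> M / r ^ n" if r: "0 < r" "r < 1" for r
  proof -
    have "norm ((deriv ^^ n) f 0) \<le> fact n * M / r ^ n"
    proof (rule Cauchy_inequality)
      show "f holomorphic_on ball 0 r" by (rule holomorphic_on_subset[OF holf]) (use r in auto)
      have "f holomorphic_on cball 0 r" by (rule holomorphic_on_subset[OF holf]) (use r in auto)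
      then show "continuous_on (cball 0 r) f" by (rule holomorphic_on_imp_continuous_on)
      show "0 < r" by fact
      show "cmod (f x) \<le> M" if "cmod (0 - x) = r" for x using that r by (intro bd) auto
    qed
    then have "norm ((deriv ^^ n) f 0) / fact n \<le> (fact n * M / r ^ n) / fact n"
      by (rule divide_right_mono) auto
    then show ?thesis unfolding taylor_coeff_def by (simp add: norm_divide)
  qed
  define r where "r k = 1 - inverse (real k + 2)" for k
  have r01: "0 < r k" "r k < 1" for k unfolding r_def by (auto simp: field_simps)
  have "r \<longlonglongrightarrow> 1" unfolding r_def by real_asymp
  then have "(\<lambda>k. M / r k ^ n) \<longlonglongrightarrow> M / 1 ^ n"
    by (intro tendsto_intros) auto
  then have "(\<lambda>k. M / r k ^ n) \<longlonglongrightarrow> M" by simp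
  then show ?thesis
    by (rule LIMSEQ_le_const) (use le r01 in auto)
qed

lemma tail_bound:
  assumes holf: "f holomorphic_on ball 0 1" and bd: "\<And>z. z \<in> ball 0 1 \<Longrightarrow> cmod (f z) \<le> M"
    and r: "0 \<le> r" "r < 1" and z: "cmod z \<le> r"
  shows "cmod (f z - (\<Sum>m<E. taylor_coeff f m * z ^ m)) \<le> M * r ^ E / (1 - r)"
proof -
  have zb: "z \<in> ball 0 1" using z r by auto
  have M0: "0 \<le> M" using coeff_bound[OF holf bd, of 0] norm_ge_zero order_trans by blast
  from sums_split_initial_segment[OF tc_series[OF holf zb], of E]
  have s: "(\<lambda>i. taylor_coeff f (i + E) * z ^ (i + E)) sums (f z - (\<Sum>m<E. taylor_coeff f m * z ^ m))" .
  have g: "(\<lambda>i. M * r ^ E * r ^ i) sums (M * r ^ E * (1 / (1 - r)))"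
    by (intro sums_mult geometric_sums) (use r in auto)
  have "cmod (suminf (\<lambda>i. taylor_coeff f (i + E) * z ^ (i + E))) \<le> suminf (\<lambda>i. M * r ^ E * r ^ i)"
  proof (rule norm_suminf_le)
    fix i
    have "cmod (taylor_coeff f (i + E) * z ^ (i + E)) = cmod (taylor_coeff f (i + E)) * cmod z ^ (i + E)"
      by (simp add: norm_mult norm_power)
    also have "\<dots> \<le> M * r ^ (i + E)"
      using coeff_bound[OF holf bd] z M0 by (intro mult_mono power_mono) auto
    finally show "cmod (taylor_coeff f (i + E) * z ^ (i + E)) \<le> M * r ^ E * r ^ i"
      by (simp add: power_add mult_ac)
  next
    show "summable (\<lambda>i. M * r ^ E * r ^ i)" using g by (rule sums_summable)
  qed
  then show ?thesis using sums_unique[OF s] sums_unique[OF g] by simp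
qed

lemma ru_pow: "ru N j 1 ^ m = ru N j m"
proof -
  have "ru N j 1 ^ m = exp (of_nat m * (2 * of_real pi * \<i> * of_nat j * of_nat 1 / of_nat N))"
    unfolding ru_def by (rule exp_of_nat_mult[symmetric])
  also have "\<dots> = ru N j m" unfolding ru_def by (simp add: field_simps)
  finally show ?thesis .
qed

lemma dparseval: assumes "N > 0"
  shows "(\<Sum>j<N. (cmod (\<Sum>m<N. c m * ru N j m))\<^sup>2) = real N * (\<Sum>m<N. (cmod (c m))\<^sup>2)"
proof -
  have "complex_of_real (\<Sum>j<N. (cmod (\<Sum>m<N. c m * ru N j m))\<^sup>2)
      = (\<Sum>j<N. (\<Sum>m<N. c m * ru N j m) * cnj (\<Sum>l<N. c l * ru N j l))"
    by (simp only: of_real_sum complex_norm_square)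
  also have "\<dots> = (\<Sum>j<N. \<Sum>m<N. \<Sum>l<N. c m * cnj (c l) * (ru N j m * cnj (ru N j l)))"
    by (simp add: sum_product cnj_sum mult_ac)
  also have "\<dots> = (\<Sum>m<N. \<Sum>j<N. \<Sum>l<N. c m * cnj (c l) * (ru N j m * cnj (ru N j l)))"
    by (rule sum.swap)
  also have "\<dots> = (\<Sum>m<N. \<Sum>l<N. \<Sum>j<N. c m * cnj (c l) * (ru N j m * cnj (ru N j l)))"
    by (rule sum.cong[OF refl], rule sum.swap)
  also have "\<dots> = (\<Sum>m<N. \<Sum>l<N. c m * cnj (c l) * (\<Sum>j<N. ru N j m * cnj (ru N j l)))"
    by (simp only: sum_distrib_left)
  also have "\<dots> = (\<Sum>m<N. \<Sum>l<N. c m * cnj (c l) * (if m = l then of_nat N else 0))"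
    using assms by (intro sum.cong refl) (simp add: ru_orth)
  also have "\<dots> = (\<Sum>m<N. c m * cnj (c m) * of_nat N)"
    by (simp add: if_distrib cong: if_cong)
  also have "\<dots> = (\<Sum>m<N. of_nat N * complex_of_real ((cmod (c m))\<^sup>2))"
    by (intro sum.cong refl) (simp only: complex_norm_square mult_ac)
  also have "\<dots> = complex_of_real (real N * (\<Sum>m<N. (cmod (c m))\<^sup>2))"
    by (simp add: sum_distrib_left)
  finally show ?thesis by (simp only: of_real_eq_iff)
qed

lemma dcoeff: assumes "N > 0" "m < N"
  shows "(\<Sum>j<N. (\<Sum>l<N. c l * ru N j l) * cnj (ru N j m)) = of_nat N * c m"
proof -
  have "(\<Sum>j<N. (\<Sum>l<N. c l * ru N j l) * cnj (ru N j m))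
      = (\<Sum>l<N. c l * (\<Sum>j<N. ru N j l * cnj (ru N j m)))"
    by (simp add: sum_distrib_left sum_distrib_right mult_ac) (rule sum.swap)
  also have "\<dots> = (\<Sum>l<N. c l * (if l = m then of_nat N else 0))"
    using assms by (intro sum.cong refl) (simp add: ru_orth)
  also have "\<dots> = of_nat N * c m" using assms by (simp add: if_distrib cong: if_cong)
  finally show ?thesis .
qed

lemma h2_bound_r:
  assumes holf: "f holomorphic_on ball 0 1" and bd: "\<And>z. z \<in> ball 0 1 \<Longrightarrow> cmod (f z) \<le> M"
    and r: "0 \<le> r" "r < 1" and E: "E > 0" "D \<le> E"
  shows "(\<Sum>m<D. (cmod (taylor_coeff f m) * r ^ m)\<^sup>2) \<le> (M + M * r ^ E / (1 - r))\<^sup>2"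
proof -
  define a where "a = taylor_coeff f"
  define T where "T = M * r ^ E / (1 - r)"
  have M0: "0 \<le> M" using coeff_bound[OF holf bd, of 0] norm_ge_zero order_trans by blast
  have T0: "0 \<le> T" unfolding T_def using M0 r by auto
  define c where "c m = a m * of_real r ^ m" for m
  have "(\<Sum>m<D. (cmod (a m) * r ^ m)\<^sup>2) \<le> (\<Sum>m<E. (cmod (a m) * r ^ m)\<^sup>2)"
    using E by (intro sum_mono2) auto
  also have "\<dots> = (\<Sum>m<E. (cmod (c m))\<^sup>2)"
    unfolding c_def using r by (simp add: norm_mult norm_power)
  also have "\<dots> = (\<Sum>j<E. (cmod (\<Sum>m<E. c m * ru E j m))\<^sup>2) / real E"
    using dparseval[OF E(1), of c] E by (simp add: field_simps)
  also have "\<dots> \<le> (\<Sum>j<E. (M + T)\<^sup>2) / real E"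
  proof (intro divide_right_mono sum_mono)
    fix j
    define z where "z = of_real r * ru E j 1"
    have cz: "cmod z = r" unfolding z_def using r by (simp add: norm_mult)
    have "(\<Sum>m<E. c m * ru E j m) = (\<Sum>m<E. a m * z ^ m)"
      unfolding c_def z_def by (intro sum.cong refl) (simp add: power_mult_distrib ru_pow[simplified])
    then have "cmod (\<Sum>m<E. c m * ru E j m) = cmod (\<Sum>m<E. a m * z ^ m)" by simp
    also have "\<dots> \<le> cmod (f z) + cmod (f z - (\<Sum>m<E. a m * z ^ m))"
      by (metis add_diff_cancel_left' diff_add_cancel norm_triangle_ineq4)
    also have "\<dots> \<le> M + T"
      unfolding a_def T_def
      by (intro add_mono bd tail_bound[OF holf bd r]) (use cz r in auto)
    finally show "(cmod (\<Sum>m<E. c m * ru E j m))\<^sup>2 \<le> (M + T)\<^sup>2"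
      by (intro power_mono) auto
  qed simp
  also have "\<dots> = (M + T)\<^sup>2" using E by simp
  finally show ?thesis unfolding a_def T_def .
qed

lemma h2_bound:
  assumes holf: "f holomorphic_on ball 0 1" and bd: "\<And>z. z \<in> ball 0 1 \<Longrightarrow> cmod (f z) \<le> M"
  shows "(\<Sum>m<D. (cmod (taylor_coeff f m))\<^sup>2) \<le> M\<^sup>2"
proof -
  have M0: "0 \<le> M" using coeff_bound[OF holf bd, of 0] norm_ge_zero order_trans by blast
  have step: "(\<Sum>m<D. (cmod (taylor_coeff f m) * r ^ m)\<^sup>2) \<le> M\<^sup>2" if r: "0 \<le> r" "r < 1" for r
  proof -
    have "(\<lambda>E. (M + M * r ^ E / (1 - r))\<^sup>2) \<longlonglongrightarrow> (M + M * 0 / (1 - r))\<^sup>2"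
      using r by (intro tendsto_intros LIMSEQ_power_zero) auto
    then have lim: "(\<lambda>E. (M + M * r ^ E / (1 - r))\<^sup>2) \<longlonglongrightarrow> M\<^sup>2" by simp
    show ?thesis
      by (rule LIMSEQ_le_const[OF lim]) (use h2_bound_r[OF holf bd r] in \<open>auto intro!: exI[of _ "Suc D"]\<close>)
  qed
  define r where "r k = 1 - inverse (real k + 2)" for k
  have r01: "0 \<le> r k" "r k < 1" for k unfolding r_def by (auto simp: field_simps)
  have "r \<longlonglongrightarrow> 1" unfolding r_def by real_asymp
  then have "(\<lambda>k. (\<Sum>m<D. (cmod (taylor_coeff f m) * r k ^ m)\<^sup>2)) \<longlonglongrightarrow> (\<Sum>m<D. (cmod (taylor_coeff f m) * 1 ^ m)\<^sup>2)"
    by (intro tendsto_intros)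
  then have "(\<lambda>k. (\<Sum>m<D. (cmod (taylor_coeff f m) * r k ^ m)\<^sup>2)) \<longlonglongrightarrow> (\<Sum>m<D. (cmod (taylor_coeff f m))\<^sup>2)"
    by simp
  then show ?thesis
    by (rule LIMSEQ_le_const2) (use step r01 in auto)
qed

lemma coeff_extract:
  assumes holf: "f holomorphic_on ball 0 1" and bd: "\<And>z. z \<in> ball 0 1 \<Longrightarrow> cmod (f z) \<le> M"
    and r: "0 \<le> r" "r < 1" and N: "m < N"
  shows "cmod (taylor_coeff f m) * r ^ m
     \<le> (\<Sum>j<N. cmod (f (of_real r * ru N j 1))) / real N + M * r ^ N / (1 - r)"
proof -
  define a where "a = taylor_coeff f"
  define T where "T = M * r ^ N / (1 - r)"
  define c where "c m = a m * of_real r ^ m" for m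
  have N0: "N > 0" using N by simp
  have "real N * (cmod (a m) * r ^ m) = cmod (of_nat N * c m)"
    unfolding c_def using r by (simp add: norm_mult norm_power)
  also have "of_nat N * c m = (\<Sum>j<N. (\<Sum>l<N. c l * ru N j l) * cnj (ru N j m))"
    by (rule dcoeff[OF N0 N, symmetric])
  also have "cmod \<dots> \<le> (\<Sum>j<N. cmod ((\<Sum>l<N. c l * ru N j l) * cnj (ru N j m)))"
    by (rule norm_sum)
  also have "\<dots> \<le> (\<Sum>j<N. cmod (f (of_real r * ru N j 1)) + T)"
  proof (intro sum_mono)
    fix j
    define z where "z = of_real r * ru N j 1"
    have cz: "cmod z = r" unfolding z_def using r by (simp add: norm_mult)
    have "(\<Sum>l<N. c l * ru N j l) = (\<Sum>l<N. a l * z ^ l)"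
      unfolding c_def z_def by (intro sum.cong refl) (simp add: power_mult_distrib ru_pow[simplified])
    then have "cmod ((\<Sum>l<N. c l * ru N j l) * cnj (ru N j m)) = cmod (\<Sum>l<N. a l * z ^ l)"
      by (simp add: norm_mult)
    also have "\<dots> \<le> cmod (f z) + cmod (f z - (\<Sum>l<N. a l * z ^ l))"
      by (metis add_diff_cancel_left' diff_add_cancel norm_triangle_ineq4)
    also have "\<dots> \<le> cmod (f z) + T"
      unfolding a_def T_def
      by (intro add_mono tail_bound[OF holf bd r]) (use cz r in auto)
    finally show "cmod ((\<Sum>l<N. c l * ru N j l) * cnj (ru N j m)) \<le> cmod (f (of_real r * ru N j 1)) + T"
      unfolding z_def .
  qed
  also have "\<dots> = (\<Sum>j<N. cmod (f (of_real r * ru N j 1))) + real N * T"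
    by (simp add: sum.distrib)
  finally have "real N * (cmod (a m) * r ^ m) \<le> (\<Sum>j<N. cmod (f (of_real r * ru N j 1))) + real N * T" .
  then show ?thesis unfolding a_def[symmetric] T_def[symmetric] using N0
    by (simp add: field_simps)
qed

lemma bw_poch: assumes "\<beta> > -1"
  shows "bergman_weight \<beta> n = fact n / pochhammer (2 + \<beta>) n"
proof -
  have a: "(2 + \<beta>) \<notin> \<int>\<^sub>\<le>\<^sub>0" using assms
    using nonpos_Ints_nonpos by fastforce
  have "pochhammer (2 + \<beta>) n = Gamma (2 + \<beta> + of_nat n) / Gamma (2 + \<beta>)"
    by (rule pochhammer_Gamma[OF a])
  moreover have "Gamma (2 + \<beta>) > 0" using assms by simp
  ultimately have e: "Gamma (real n + 2 + \<beta>) = Gamma (2 + \<beta>) * pochhammer (2 + \<beta>) n"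
    by (simp add: field_simps add_ac)
  show ?thesis unfolding bergman_weight_def e using \<open>Gamma (2 + \<beta>) > 0\<close> by simp
qed

lemma fact_le_poch: assumes "a \<ge> (1::real)" shows "fact n \<le> pochhammer a n"
proof (induction n)
  case 0 then show ?case by simp
next
  case (Suc n)
  have "fact (Suc n) = (real n + 1) * (fact n :: real)" by (simp add: algebra_simps)
  also have "\<dots> \<le> (a + real n) * pochhammer a n"
    using Suc assms by (intro mult_mono) auto
  also have "\<dots> = pochhammer a (Suc n)" by (simp add: pochhammer_Suc)
  finally show ?case .
qed

lemma bw_pos: assumes "\<beta> > -1" shows "bergman_weight \<beta> n > 0"
  using assms unfolding bergman_weight_def by simp

lemma bw_le1: assumes "\<beta> > -1" shows "bergman_weight \<beta> n \<le> 1"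
proof -
  have "fact n \<le> pochhammer (2 + \<beta>) n" using assms by (intro fact_le_poch) auto
  moreover have "pochhammer (2 + \<beta>) n > 0" using assms by (intro pochhammer_pos) auto
  ultimately show ?thesis using bw_poch[OF assms] by simp
qed

lemma bw_lim: assumes "\<beta> > -1" shows "bergman_weight \<beta> \<longlonglongrightarrow> 0"
proof -
  define a where "a = 2 + \<beta>"
  have a1: "a > 1" using assms a_def by simp
  have eq: "bergman_weight \<beta> n = Gamma_series a n * ((a + real n) / exp (a * ln (real n)))"
    if "n > 0" for n
  proof -
    have "pochhammer a n > 0" using a1 by (intro pochhammer_pos) auto
    moreover have "a + real n > 0" using a1 by simp
    moreover have "exp (a * ln (real n)) > 0" by simp
    ultimately show ?thesis using that
      unfolding bw_poch[OF assms] Gamma_series_def a_def[symmetric]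
      by (simp add: pochhammer_Suc)
  qed
  have "(\<lambda>n. (a + real n) / exp (a * ln (real n))) \<longlonglongrightarrow> 0"
    using a1 by real_asymp
  then have "(\<lambda>n. Gamma_series a n * ((a + real n) / exp (a * ln (real n)))) \<longlonglongrightarrow> Gamma a * 0"
    by (intro tendsto_mult Gamma_series_LIMSEQ)
  moreover have "eventually (\<lambda>n. Gamma_series a n * ((a + real n) / exp (a * ln (real n))) = bergman_weight \<beta> n) sequentially"
    using eq unfolding eventually_sequentially by (intro exI[of _ 1]) auto
  ultimately show ?thesis using Lim_transform_eventually by fastforce
qed

lemma bounded_summable:
  assumes b: "\<beta> > -1" and holf: "f holomorphic_on ball 0 1" and bd: "\<And>z. z \<in> ball 0 1 \<Longrightarrow> cmod (f z) \<le> M"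
  shows "summable (\<lambda>n. (cmod (taylor_coeff f n))\<^sup>2)"
    and "summable (\<lambda>n. bergman_weight \<beta> n * (cmod (taylor_coeff f n))\<^sup>2)"
    and "bergman_norm2 \<beta> f \<le> M\<^sup>2"
proof -
  show s: "summable (\<lambda>n. (cmod (taylor_coeff f n))\<^sup>2)"
    by (rule summableI_nonneg_bounded[where x="M\<^sup>2"]) (use h2_bound[OF holf bd] in auto)
  show s2: "summable (\<lambda>n. bergman_weight \<beta> n * (cmod (taylor_coeff f n))\<^sup>2)"
    by (rule summable_comparison_test'[OF s, of 0])
       (simp add: abs_mult abs_of_pos[OF bw_pos[OF b]] mult_left_le_one_le bw_le1[OF b] less_imp_le[OF bw_pos[OF b]])
  have "bergman_norm2 \<beta> f \<le> (\<Sum>n. (cmod (taylor_coeff f n))\<^sup>2)"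
    unfolding bergman_norm2_def
    by (rule suminf_le[OF _ s2 s]) (simp add: mult_left_le_one_le bw_le1[OF b] less_imp_le[OF bw_pos[OF b]])
  also have "\<dots> \<le> M\<^sup>2"
    by (rule suminf_le_const[OF s]) (use h2_bound[OF holf bd] in auto)
  finally show "bergman_norm2 \<beta> f \<le> M\<^sup>2" .
qed

lemma coeff_tendsto:
  assumes holf: "\<And>n. h n holomorphic_on ball 0 1" and bd: "\<And>n z. z \<in> ball 0 1 \<Longrightarrow> cmod (h n z) \<le> M"
    and lim: "\<And>z. z \<in> ball 0 1 \<Longrightarrow> (\<lambda>n. h n z) \<longlonglongrightarrow> 0"
  shows "(\<lambda>n. taylor_coeff (h n) m) \<longlonglongrightarrow> 0"
proof (rule tendstoI)
  fix \<epsilon> :: real assume e: "\<epsilon> > 0"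
  define r :: real where "r = 1/2"
  have "cmod (h 0 0) \<le> M" by (rule bd) simp
  then have M0: "0 \<le> M" using norm_ge_zero order_trans by blast
  define \<delta> where "\<delta> = \<epsilon> * r ^ m / 4"
  have d0: "\<delta> > 0" unfolding \<delta>_def r_def using e by simp
  have "(\<lambda>N. M * r ^ N / (1 - r)) \<longlonglongrightarrow> M * 0 / (1 - r)"
    unfolding r_def by (intro tendsto_intros LIMSEQ_power_zero) auto
  then have "eventually (\<lambda>N. M * r ^ N / (1 - r) < \<delta>) sequentially"
    using d0 by (intro order_tendstoD(2)) auto
  then obtain N0 where N0: "\<And>N. N \<ge> N0 \<Longrightarrow> M * r ^ N / (1 - r) < \<delta>"
    unfolding eventually_sequentially by blast
  define N where "N = max N0 (Suc m)"
  have mN: "m < N" and NN0: "N \<ge> N0" unfolding N_def by auto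
  have zb: "of_real r * ru N j 1 \<in> ball 0 1" for j unfolding r_def by (simp add: norm_mult)
  have "(\<lambda>n. cmod (h n (of_real r * ru N j 1))) \<longlonglongrightarrow> 0" for j
    by (intro tendsto_norm_zero lim zb)
  then have "(\<lambda>n. \<Sum>j<N. cmod (h n (of_real r * ru N j 1))) \<longlonglongrightarrow> (\<Sum>j<N. 0)"
    by (intro tendsto_sum) 
  then have "(\<lambda>n. (\<Sum>j<N. cmod (h n (of_real r * ru N j 1))) / real N) \<longlonglongrightarrow> (\<Sum>j<N. 0) / real N"
    using mN by (intro tendsto_divide tendsto_const) auto
  then have "eventually (\<lambda>n. (\<Sum>j<N. cmod (h n (of_real r * ru N j 1))) / real N < \<delta>) sequentially"
    using d0 by (intro order_tendstoD(2)) auto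
  then show "eventually (\<lambda>n. dist (taylor_coeff (h n) m) 0 < \<epsilon>) sequentially"
  proof (rule eventually_mono)
    fix n assume A: "(\<Sum>j<N. cmod (h n (of_real r * ru N j 1))) / real N < \<delta>"
    have "cmod (taylor_coeff (h n) m) * r ^ m
      \<le> (\<Sum>j<N. cmod (h n (of_real r * ru N j 1))) / real N + M * r ^ N / (1 - r)"
      by (rule coeff_extract[OF holf bd _ _ mN]) (auto simp: r_def)
    also have "\<dots> < 2 * \<delta>" using A N0[OF NN0] by linarith
    also have "\<dots> < \<epsilon> * r ^ m" unfolding \<delta>_def r_def using e by simp
    finally have "cmod (taylor_coeff (h n) m) * r ^ m < \<epsilon> * r ^ m" .
    moreover have "r ^ m > 0" unfolding r_def by simp
    ultimately have "cmod (taylor_coeff (h n) m) < \<epsilon>" using mult_less_cancel_right_pos by blast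
    then show "dist (taylor_coeff (h n) m) 0 < \<epsilon>" by (simp add: dist_norm)
  qed
qed

lemma norm2_nonneg: assumes "\<beta> > -1" "summable (\<lambda>n. bergman_weight \<beta> n * (cmod (taylor_coeff f n))\<^sup>2)"
  shows "bergman_norm2 \<beta> f \<ge> 0"
  unfolding bergman_norm2_def
  by (rule suminf_nonneg[OF assms(2)]) (simp add: less_imp_le[OF bw_pos[OF assms(1)]])

lemma decay:
  assumes b: "\<beta> > -1"
    and holf: "\<And>n. h n holomorphic_on ball 0 1" and bd: "\<And>n z. z \<in> ball 0 1 \<Longrightarrow> cmod (h n z) \<le> M"
    and lim: "\<And>z. z \<in> ball 0 1 \<Longrightarrow> (\<lambda>n. h n z) \<longlonglongrightarrow> 0"
  shows "(\<lambda>n. bergman_norm2 \<beta> (h n)) \<longlonglongrightarrow> 0"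
proof (rule order_tendstoI)
  fix a :: real assume "a < 0"
  then show "eventually (\<lambda>n. a < bergman_norm2 \<beta> (h n)) sequentially"
    using norm2_nonneg[OF b bounded_summable(2)[OF b holf bd]] by (intro always_eventually) (auto intro: less_le_trans)
next
  fix \<epsilon> :: real assume e: "\<epsilon> > 0"
  define w where "w = bergman_weight \<beta>"
  define b where "b n m = (cmod (taylor_coeff (h n) m))\<^sup>2" for n m
  have w0: "0 \<le> w m" for m unfolding w_def using bw_pos[OF b] less_imp_le by blast
  define c where "c = \<epsilon> / (2 * (M\<^sup>2 + 1))"
  have "0 < M\<^sup>2 + 1" using zero_le_power2[of M] by linarith
  then have c0: "c > 0" unfolding c_def using e by simp
  have "eventually (\<lambda>m. w m < c) sequentially"
    using bw_lim[OF b] c0 unfolding w_def by (intro order_tendstoD(2)) auto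
  then obtain D where D: "\<And>m. m \<ge> D \<Longrightarrow> w m < c" unfolding eventually_sequentially by blast
  have "(\<lambda>n. \<Sum>m<D. w m * (cmod (taylor_coeff (h n) m))\<^sup>2) \<longlonglongrightarrow> (\<Sum>m<D. w m * (cmod 0)\<^sup>2)"
    by (intro tendsto_sum tendsto_mult tendsto_const tendsto_power tendsto_norm coeff_tendsto[OF holf bd lim])
  then have "eventually (\<lambda>n. (\<Sum>m<D. w m * b n m) < \<epsilon> / 2) sequentially"
    unfolding b_def using e by (intro order_tendstoD(2)) auto
  then show "eventually (\<lambda>n. bergman_norm2 \<beta> (h n) < \<epsilon>) sequentially"
  proof (rule eventually_mono)
    fix n assume A: "(\<Sum>m<D. w m * b n m) < \<epsilon> / 2"
    have sb: "summable (b n)" unfolding b_def by (rule bounded_summable(1)[OF b holf bd])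
    have swb: "summable (\<lambda>m. w m * b n m)" unfolding b_def w_def by (rule bounded_summable(2)[OF b holf bd])
    have b0: "0 \<le> b n m" for m unfolding b_def by simp
    have "bergman_norm2 \<beta> (h n) = (\<Sum>i. w (i + D) * b n (i + D)) + (\<Sum>m<D. w m * b n m)"
      unfolding bergman_norm2_def w_def[symmetric] b_def[symmetric]
      by (rule suminf_split_initial_segment[OF swb])
    also have "(\<Sum>i. w (i + D) * b n (i + D)) \<le> (\<Sum>i. c * b n (i + D))"
    proof (rule suminf_le)
      fix i show "w (i + D) * b n (i + D) \<le> c * b n (i + D)"
        using D[of "i + D"] b0[of "i + D"] by (intro mult_right_mono) auto
      show "summable (\<lambda>i. w (i + D) * b n (i + D))"
        using summable_ignore_initial_segment[OF swb, of D] by simp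
      show "summable (\<lambda>i. c * b n (i + D))"
        using summable_ignore_initial_segment[OF sb, of D] by (intro summable_mult)
    qed
    also have "(\<Sum>i. c * b n (i + D)) = c * (\<Sum>i. b n (i + D))"
      by (rule suminf_mult) (rule summable_ignore_initial_segment[OF sb])
    also have "(\<Sum>i. b n (i + D)) \<le> M\<^sup>2"
    proof (rule suminf_le_const[OF summable_ignore_initial_segment[OF sb]])
      fix K
      have "(\<Sum>i<K. b n (i + D)) \<le> (\<Sum>i<K + D. b n i)"
      proof -
        have "(\<Sum>i<K. b n (i + D)) = (\<Sum>i\<in>(\<lambda>i. i + D) ` {..<K}. b n i)"
          by (subst sum.reindex) (auto simp: inj_on_def)
        also have "\<dots> \<le> (\<Sum>i<K + D. b n i)"
          by (rule sum_mono2) (auto simp: b0)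
        finally show ?thesis .
      qed
      also have "\<dots> \<le> M\<^sup>2" unfolding b_def by (rule h2_bound[OF holf bd])
      finally show "(\<Sum>i<K. b n (i + D)) \<le> M\<^sup>2" .
    qed
    then have "c * (\<Sum>i. b n (i + D)) \<le> c * M\<^sup>2" using c0 by (intro mult_left_mono) auto
    also have "c * M\<^sup>2 < \<epsilon> / 2"
    proof -
      have "c * M\<^sup>2 = \<epsilon> / 2 * (M\<^sup>2 / (M\<^sup>2 + 1))" unfolding c_def by (simp add: field_simps)
      also have "\<dots> < \<epsilon> / 2 * 1"
      proof (intro mult_strict_left_mono)
        show "M\<^sup>2 / (M\<^sup>2 + 1) < 1" using \<open>0 < M\<^sup>2 + 1\<close> by (simp add: divide_less_eq)
      qed (use e in auto)
      finally show ?thesis by simp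
    qed
    finally show "bergman_norm2 \<beta> (h n) < \<epsilon>" using A by simp
  qed
qed

definition Hb :: "(complex \<Rightarrow> complex) \<Rightarrow> bool" where
  "Hb g \<longleftrightarrow> g holomorphic_on ball 0 1 \<and> (\<exists>M. \<forall>z\<in>ball 0 1. cmod (g z) \<le> M)"

lemma Hb_add: "Hb f \<Longrightarrow> Hb g \<Longrightarrow> Hb (\<lambda>z. f z + g z)"
  unfolding Hb_def
proof (elim conjE exE, intro conjI holomorphic_intros exI ballI)
  fix M1 M2 z assume "\<forall>z\<in>ball 0 1. cmod (f z) \<le> M1" "\<forall>z\<in>ball 0 1. cmod (g z) \<le> M2" "z \<in> ball (0::complex) 1"
  then show "cmod (f z + g z) \<le> M1 + M2" by (meson add_mono norm_triangle_le)
qed auto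

lemma Hb_cmult: "Hb f \<Longrightarrow> Hb (\<lambda>z. c * f z)"
  unfolding Hb_def
proof (elim conjE exE, intro conjI holomorphic_intros exI ballI)
  fix M z assume "\<forall>z\<in>ball 0 1. cmod (f z) \<le> M" "z \<in> ball (0::complex) 1"
  then show "cmod (c * f z) \<le> cmod c * M" by (simp add: norm_mult mult_left_mono)
qed auto

lemma Hb_diff: "Hb f \<Longrightarrow> Hb g \<Longrightarrow> Hb (\<lambda>z. f z - g z)"
  using Hb_add[of f "\<lambda>z. (-1) * g z"] Hb_cmult[of g "-1"] by simp

lemma Hb_const: "Hb (\<lambda>z. c)"
  unfolding Hb_def by auto

lemma Hb_power: "Hb (\<lambda>z. z ^ k)"
  unfolding Hb_def
proof (intro conjI holomorphic_intros exI[of _ 1] ballI)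
  fix z :: complex assume "z \<in> ball 0 1"
  then show "cmod (z ^ k) \<le> 1" by (simp add: norm_power power_le_one)
qed

lemma Hb_sum: "finite I \<Longrightarrow> (\<And>i. i \<in> I \<Longrightarrow> Hb (f i)) \<Longrightarrow> Hb (\<lambda>z. \<Sum>i\<in>I. f i z)"
  by (induction I rule: finite_induct) (auto intro: Hb_add Hb_const)

lemma Hb_holo: "Hb f \<Longrightarrow> f holomorphic_on ball 0 1" unfolding Hb_def by simp

lemma bs_holo: "f \<in> bergman_space \<beta> \<Longrightarrow> f holomorphic_on ball 0 1"
  unfolding bergman_space_def by simp

lemma Hb_bs: "\<beta> > -1 \<Longrightarrow> Hb f \<Longrightarrow> f \<in> bergman_space \<beta>"
  unfolding Hb_def bergman_space_def using bounded_summable(2) by blast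

lemma sq_add_le: "(cmod (a + b))\<^sup>2 \<le> 2 * (cmod a)\<^sup>2 + 2 * (cmod b)\<^sup>2"
proof -
  define x where "x = cmod a"
  define y where "y = cmod b"
  have "(cmod (a + b))\<^sup>2 \<le> (x + y)\<^sup>2" unfolding x_def y_def by (intro power_mono norm_triangle_ineq) auto
  moreover have "(x + y)\<^sup>2 = x\<^sup>2 + 2*x*y + y\<^sup>2" "(x - y)\<^sup>2 = x\<^sup>2 - 2*x*y + y\<^sup>2"
    by (simp_all add: power2_eq_square algebra_simps)
  moreover have "0 \<le> (x - y)\<^sup>2" by simp
  ultimately show ?thesis unfolding x_def[symmetric] y_def[symmetric] by linarith
qed

context
  fixes \<beta> :: real assumes b: "\<beta> > -1"
begin

lemma bs_add:
  assumes f: "f \<in> bergman_space \<beta>" and g: "g \<in> bergman_space \<beta>"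
  shows "(\<lambda>z. f z + g z) \<in> bergman_space \<beta>"
    and "bergman_norm2 \<beta> (\<lambda>z. f z + g z) \<le> 2 * bergman_norm2 \<beta> f + 2 * bergman_norm2 \<beta> g"
proof -
  have hf: "f holomorphic_on ball 0 1" and hg: "g holomorphic_on ball 0 1" using f g by (auto dest: bs_holo)
  define w where "w = bergman_weight \<beta>"
  have w0: "0 \<le> w n" for n unfolding w_def using bw_pos[OF b] less_imp_le by blast
  have sf: "summable (\<lambda>n. w n * (cmod (taylor_coeff f n))\<^sup>2)"
    and sg: "summable (\<lambda>n. w n * (cmod (taylor_coeff g n))\<^sup>2)"
    using f g unfolding bergman_space_def w_def by auto
  have tc: "taylor_coeff (\<lambda>z. f z + g z) n = taylor_coeff f n + taylor_coeff g n" for n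
    by (rule tc_add[OF hf hg])
  have le: "w n * (cmod (taylor_coeff (\<lambda>z. f z + g z) n))\<^sup>2
      \<le> 2 * (w n * (cmod (taylor_coeff f n))\<^sup>2) + 2 * (w n * (cmod (taylor_coeff g n))\<^sup>2)" for n
    unfolding tc using mult_left_mono[OF sq_add_le w0] by (simp add: algebra_simps)
  have s2: "summable (\<lambda>n. 2 * (w n * (cmod (taylor_coeff f n))\<^sup>2) + 2 * (w n * (cmod (taylor_coeff g n))\<^sup>2))"
    by (intro summable_add summable_mult sf sg)
  have s: "summable (\<lambda>n. w n * (cmod (taylor_coeff (\<lambda>z. f z + g z) n))\<^sup>2)"
    by (rule summable_comparison_test'[OF s2, of 0]) (use le w0 in auto)
  then show "(\<lambda>z. f z + g z) \<in> bergman_space \<beta>"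
    unfolding bergman_space_def w_def using hf hg by (auto intro!: holomorphic_intros)
  have "bergman_norm2 \<beta> (\<lambda>z. f z + g z) \<le> (\<Sum>n. 2 * (w n * (cmod (taylor_coeff f n))\<^sup>2) + 2 * (w n * (cmod (taylor_coeff g n))\<^sup>2))"
    unfolding bergman_norm2_def w_def[symmetric] by (rule suminf_le[OF le s s2])
  also have "\<dots> = (\<Sum>n. 2 * (w n * (cmod (taylor_coeff f n))\<^sup>2)) + (\<Sum>n. 2 * (w n * (cmod (taylor_coeff g n))\<^sup>2))"
    by (rule suminf_add[symmetric]) (intro summable_mult sf sg)+
  also have "\<dots> = 2 * bergman_norm2 \<beta> f + 2 * bergman_norm2 \<beta> g"
    unfolding bergman_norm2_def w_def[symmetric] by (simp add: suminf_mult[OF sf] suminf_mult[OF sg])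
  finally show "bergman_norm2 \<beta> (\<lambda>z. f z + g z) \<le> 2 * bergman_norm2 \<beta> f + 2 * bergman_norm2 \<beta> g" .
qed

lemma bs_cmult:
  assumes f: "f \<in> bergman_space \<beta>"
  shows "(\<lambda>z. c * f z) \<in> bergman_space \<beta>"
    and "bergman_norm2 \<beta> (\<lambda>z. c * f z) = (cmod c)\<^sup>2 * bergman_norm2 \<beta> f"
proof -
  have hf: "f holomorphic_on ball 0 1" using f by (auto dest: bs_holo)
  have sf: "summable (\<lambda>n. bergman_weight \<beta> n * (cmod (taylor_coeff f n))\<^sup>2)"
    using f unfolding bergman_space_def by auto
  have eq: "(\<lambda>n. bergman_weight \<beta> n * (cmod (taylor_coeff (\<lambda>z. c * f z) n))\<^sup>2)
      = (\<lambda>n. (cmod c)\<^sup>2 * (bergman_weight \<beta> n * (cmod (taylor_coeff f n))\<^sup>2))"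
    by (simp add: tc_cmult[OF hf] norm_mult power_mult_distrib mult_ac)
  have "summable (\<lambda>n. bergman_weight \<beta> n * (cmod (taylor_coeff (\<lambda>z. c * f z) n))\<^sup>2)"
    unfolding eq by (intro summable_mult sf)
  then show "(\<lambda>z. c * f z) \<in> bergman_space \<beta>"
    unfolding bergman_space_def using hf by (auto intro!: holomorphic_intros)
  show "bergman_norm2 \<beta> (\<lambda>z. c * f z) = (cmod c)\<^sup>2 * bergman_norm2 \<beta> f"
    unfolding bergman_norm2_def eq by (rule suminf_mult[OF sf])
qed

lemma bs_diff:
  assumes f: "f \<in> bergman_space \<beta>" and g: "g \<in> bergman_space \<beta>"
  shows "(\<lambda>z. f z - g z) \<in> bergman_space \<beta>"
  using bs_add(1)[OF f bs_cmult(1)[OF g, of "-1"]] by simp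

lemma bs_nonneg: "f \<in> bergman_space \<beta> \<Longrightarrow> bergman_norm2 \<beta> f \<ge> 0"
  using norm2_nonneg[OF b] unfolding bergman_space_def by blast

lemma norm2_swap:
  assumes "f holomorphic_on ball 0 1" "g holomorphic_on ball 0 1"
  shows "bergman_norm2 \<beta> (\<lambda>z. f z - g z) = bergman_norm2 \<beta> (\<lambda>z. g z - f z)"
  unfolding bergman_norm2_def using assms by (simp add: tc_diff norm_minus_commute)

lemma norm2_zero: "bergman_norm2 \<beta> (\<lambda>z. 0) = 0"
  unfolding bergman_norm2_def by (simp add: tc_const)

end

context
  fixes \<beta> :: real and \<phi> :: "complex \<Rightarrow> complex" and \<omega> :: complex
  assumes b: "\<beta> > -1"
    and hphi: "\<phi> holomorphic_on ball 0 1" and mphi: "\<phi> ` ball 0 1 \<subseteq> ball 0 1"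
begin

definition apx :: "(complex \<Rightarrow> complex) \<Rightarrow> bool" where
  "apx h \<longleftrightarrow> (\<forall>\<delta>>0. \<exists>g. Hb g \<and> bergman_norm2 \<beta> (\<lambda>z. (g (\<phi> z) - g z) - h z) < \<delta>)"

lemma Hb_comp: assumes "Hb g" shows "Hb (\<lambda>z. g (\<phi> z))"
proof -
  from assms obtain M where hg: "g holomorphic_on ball 0 1" and M: "\<forall>z\<in>ball 0 1. cmod (g z) \<le> M"
    unfolding Hb_def by blast
  have "(g \<circ> \<phi>) holomorphic_on ball 0 1"
    by (rule holomorphic_on_compose_gen[OF hphi hg mphi])
  moreover have "\<forall>z\<in>ball 0 1. cmod (g (\<phi> z)) \<le> M" using M mphi by blast
  ultimately show ?thesis unfolding Hb_def o_def by blast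
qed

lemma err_bs: assumes "Hb g" "h \<in> bergman_space \<beta>"
  shows "(\<lambda>z. (g (\<phi> z) - g z) - h z) \<in> bergman_space \<beta>"
  by (intro bs_diff[OF b] Hb_bs[OF b] Hb_diff Hb_comp assms)

lemma apx_add:
  assumes "apx h1" "apx h2" "h1 \<in> bergman_space \<beta>" "h2 \<in> bergman_space \<beta>"
  shows "apx (\<lambda>z. h1 z + h2 z)"
  unfolding apx_def
proof (intro allI impI)
  fix \<delta> :: real assume d: "\<delta> > 0"
  obtain g1 where g1: "Hb g1" "bergman_norm2 \<beta> (\<lambda>z. (g1 (\<phi> z) - g1 z) - h1 z) < \<delta> / 4"
    using assms(1) d unfolding apx_def by (meson zero_less_divide_iff zero_less_numeral)
  obtain g2 where g2: "Hb g2" "bergman_norm2 \<beta> (\<lambda>z. (g2 (\<phi> z) - g2 z) - h2 z) < \<delta> / 4"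
    using assms(2) d unfolding apx_def by (meson zero_less_divide_iff zero_less_numeral)
  have eq: "(\<lambda>z. ((g1 z + g2 z) - (g1 z + g2 z)) - 0) = (\<lambda>z. 0)" by simp
  have "bergman_norm2 \<beta> (\<lambda>z. ((\<lambda>z. g1 z + g2 z) (\<phi> z) - (\<lambda>z. g1 z + g2 z) z) - (h1 z + h2 z))
     = bergman_norm2 \<beta> (\<lambda>z. ((g1 (\<phi> z) - g1 z) - h1 z) + ((g2 (\<phi> z) - g2 z) - h2 z))"
    by (simp add: algebra_simps)
  also have "\<dots> \<le> 2 * bergman_norm2 \<beta> (\<lambda>z. (g1 (\<phi> z) - g1 z) - h1 z) + 2 * bergman_norm2 \<beta> (\<lambda>z. (g2 (\<phi> z) - g2 z) - h2 z)"
    by (rule bs_add(2)[OF b err_bs err_bs]) (use g1 g2 assms in auto)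
  also have "\<dots> < \<delta>" using g1 g2 by simp
  finally show "\<exists>g. Hb g \<and> bergman_norm2 \<beta> (\<lambda>z. (g (\<phi> z) - g z) - (h1 z + h2 z)) < \<delta>"
    using Hb_add[OF g1(1) g2(1)] by blast
qed

lemma apx_cmult:
  assumes "apx h" "h \<in> bergman_space \<beta>"
  shows "apx (\<lambda>z. c * h z)"
  unfolding apx_def
proof (intro allI impI)
  fix \<delta> :: real assume d: "\<delta> > 0"
  have c1: "(cmod c)\<^sup>2 + 1 > 0" using zero_le_power2[of "cmod c"] by linarith
  obtain g where g: "Hb g" "bergman_norm2 \<beta> (\<lambda>z. (g (\<phi> z) - g z) - h z) < \<delta> / ((cmod c)\<^sup>2 + 1)"
    using assms(1) d c1 unfolding apx_def by (meson divide_pos_pos)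
  have e: "(\<lambda>z. (g (\<phi> z) - g z) - h z) \<in> bergman_space \<beta>" by (rule err_bs[OF g(1) assms(2)])
  have "bergman_norm2 \<beta> (\<lambda>z. ((\<lambda>z. c * g z) (\<phi> z) - (\<lambda>z. c * g z) z) - c * h z)
     = bergman_norm2 \<beta> (\<lambda>z. c * ((g (\<phi> z) - g z) - h z))"
    by (simp add: algebra_simps)
  also have "\<dots> = (cmod c)\<^sup>2 * bergman_norm2 \<beta> (\<lambda>z. (g (\<phi> z) - g z) - h z)"
    by (rule bs_cmult(2)[OF b e])
  also have "\<dots> \<le> (cmod c)\<^sup>2 * (\<delta> / ((cmod c)\<^sup>2 + 1))"
    using g(2) by (intro mult_left_mono) auto
  also have "\<dots> < \<delta>"
  proof -
    have "(cmod c)\<^sup>2 * (\<delta> / ((cmod c)\<^sup>2 + 1)) = \<delta> * ((cmod c)\<^sup>2 / ((cmod c)\<^sup>2 + 1))" by simp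
    also have "\<dots> < \<delta> * 1" using c1 d by (intro mult_strict_left_mono) (auto simp: divide_less_eq)
    finally show ?thesis by simp
  qed
  finally show "\<exists>g. Hb g \<and> bergman_norm2 \<beta> (\<lambda>z. (g (\<phi> z) - g z) - c * h z) < \<delta>"
    using Hb_cmult[OF g(1)] by blast
qed

lemma apx_zero: "apx (\<lambda>z. 0)"
  unfolding apx_def
proof (intro allI impI exI conjI)
  fix \<delta> :: real assume "\<delta> > 0"
  show "Hb (\<lambda>z. 0)" by (rule Hb_const)
  show "bergman_norm2 \<beta> (\<lambda>z. ((\<lambda>z. 0) (\<phi> z) - (\<lambda>z. 0) z) - 0) < \<delta>"
    using norm2_zero[OF b] \<open>\<delta> > 0\<close> by simp
qed

lemma apx_sum_aux:
  "finite I \<Longrightarrow> (\<forall>i\<in>I. apx (f i) \<and> f i \<in> bergman_space \<beta>) \<Longrightarrow>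
    apx (\<lambda>z. \<Sum>i\<in>I. f i z) \<and> (\<lambda>z. \<Sum>i\<in>I. f i z) \<in> bergman_space \<beta>"
proof (induction I rule: finite_induct)
  case empty
  show ?case using apx_zero Hb_bs[OF b Hb_const[of 0]] by simp
next
  case (insert x F)
  then have IH: "apx (\<lambda>z. \<Sum>i\<in>F. f i z)" "(\<lambda>z. \<Sum>i\<in>F. f i z) \<in> bergman_space \<beta>"
    and fx: "apx (f x)" "f x \<in> bergman_space \<beta>" by auto
  show ?case using insert(1,2) apx_add[OF fx(1) IH(1) fx(2) IH(2)] bs_add(1)[OF b fx(2) IH(2)] by simp
qed

lemma apx_sum:
  assumes "finite I" "\<And>i. i \<in> I \<Longrightarrow> apx (f i)" "\<And>i. i \<in> I \<Longrightarrow> f i \<in> bergman_space \<beta>"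
  shows "apx (\<lambda>z. \<Sum>i\<in>I. f i z)" and "(\<lambda>z. \<Sum>i\<in>I. f i z) \<in> bergman_space \<beta>"
  using apx_sum_aux[OF assms(1), of f] assms(2,3) by auto

lemma apx_closure:
  assumes h: "h \<in> bergman_space \<beta>"
    and approx: "\<And>\<delta>. \<delta> > 0 \<Longrightarrow> \<exists>h'. h' \<in> bergman_space \<beta> \<and> apx h' \<and> bergman_norm2 \<beta> (\<lambda>z. h z - h' z) < \<delta>"
  shows "apx h"
  unfolding apx_def
proof (intro allI impI)
  fix \<delta> :: real assume d: "\<delta> > 0"
  obtain h' where h': "h' \<in> bergman_space \<beta>" "apx h'" "bergman_norm2 \<beta> (\<lambda>z. h z - h' z) < \<delta> / 4"
    using approx[of "\<delta>/4"] d by auto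
  obtain g where g: "Hb g" "bergman_norm2 \<beta> (\<lambda>z. (g (\<phi> z) - g z) - h' z) < \<delta> / 4"
    using h'(2) d unfolding apx_def by (meson zero_less_divide_iff zero_less_numeral)
  have "bergman_norm2 \<beta> (\<lambda>z. (g (\<phi> z) - g z) - h z)
     = bergman_norm2 \<beta> (\<lambda>z. ((g (\<phi> z) - g z) - h' z) + (h' z - h z))"
    by (simp add: algebra_simps)
  also have "\<dots> \<le> 2 * bergman_norm2 \<beta> (\<lambda>z. (g (\<phi> z) - g z) - h' z) + 2 * bergman_norm2 \<beta> (\<lambda>z. h' z - h z)"
    by (rule bs_add(2)[OF b err_bs[OF g(1) h'(1)] bs_diff[OF b h'(1) h]])
  also have "bergman_norm2 \<beta> (\<lambda>z. h' z - h z) = bergman_norm2 \<beta> (\<lambda>z. h z - h' z)"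
    by (rule norm2_swap[OF b]) (use h h'(1) in \<open>auto dest: bs_holo\<close>)
  also have "2 * bergman_norm2 \<beta> (\<lambda>z. (g (\<phi> z) - g z) - h' z) + 2 * bergman_norm2 \<beta> (\<lambda>z. h z - h' z) < \<delta>"
    using g(2) h'(3) by simp
  finally show "\<exists>g. Hb g \<and> bergman_norm2 \<beta> (\<lambda>z. (g (\<phi> z) - g z) - h z) < \<delta>"
    using g(1) by blast
qed

end

context
  fixes \<beta> :: real and \<phi> :: "complex \<Rightarrow> complex" and \<omega> :: complex
  assumes b: "\<beta> > -1"
    and hphi: "\<phi> holomorphic_on ball 0 1" and mphi: "\<phi> ` ball 0 1 \<subseteq> ball 0 1"
    and dw: "denjoy_wolff_point \<phi> \<omega>" and om: "cmod \<omega> = 1"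
begin

lemma iter: "(\<phi>^^n) holomorphic_on ball 0 1 \<and> (\<phi>^^n) ` ball 0 1 \<subseteq> ball 0 1"
proof (induction n)
  case 0 then show ?case by (simp add: id_def)
next
  case (Suc n)
  then have "(\<phi> \<circ> \<phi>^^n) holomorphic_on ball 0 1"
    by (intro holomorphic_on_compose_gen[OF _ hphi]) auto
  moreover have "(\<phi> \<circ> \<phi>^^n) ` ball 0 1 \<subseteq> ball 0 1" using Suc mphi by auto
  ultimately show ?case by (simp only: funpow.simps(2))
qed

lemma Hb_iter_pow: "Hb (\<lambda>z. ((\<phi>^^j) z) ^ k)"
  unfolding Hb_def
proof (intro conjI exI[of _ 1] ballI)
  show "(\<lambda>z. ((\<phi>^^j) z) ^ k) holomorphic_on ball 0 1"
    using iter[of j] by (intro holomorphic_intros) auto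
  fix z :: complex assume "z \<in> ball 0 1"
  then have "(\<phi>^^j) z \<in> ball 0 1" using iter[of j] by blast
  then have "cmod ((\<phi>^^j) z) \<le> 1" by simp
  then show "cmod (((\<phi>^^j) z) ^ k) \<le> 1" by (simp add: norm_power power_le_one)
qed

lemma apx_mono: "apx \<beta> \<phi> (\<lambda>z. z ^ k - \<omega> ^ k)"
  unfolding apx_def[OF b hphi mphi]
proof (intro allI impI)
  fix \<delta> :: real assume d: "\<delta> > 0"
  define h where "h n z = \<omega> ^ k - ((\<phi>^^n) z) ^ k" for n z
  have hh: "h n holomorphic_on ball 0 1" for n
    unfolding h_def using iter[of n] by (intro holomorphic_intros) auto
  have hb: "cmod (h n z) \<le> 2" if "z \<in> ball 0 1" for n z
  proof -
    have "(\<phi>^^n) z \<in> ball 0 1" using that iter[of n] by blast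
    then have "cmod ((\<phi>^^n) z) \<le> 1" by simp
    then have "cmod (((\<phi>^^n) z) ^ k) \<le> 1" by (simp add: norm_power power_le_one)
    moreover have "cmod (\<omega> ^ k) = 1" using om by (simp add: norm_power)
    ultimately show ?thesis unfolding h_def using norm_triangle_ineq4[of "\<omega> ^ k" "((\<phi>^^n) z) ^ k"] by linarith
  qed
  have hl: "(\<lambda>n. h n z) \<longlonglongrightarrow> 0" if "z \<in> ball 0 1" for z
  proof -
    have "(\<lambda>n. (\<phi>^^n) z) \<longlonglongrightarrow> \<omega>" using dw that unfolding denjoy_wolff_point_def by blast
    then have "(\<lambda>n. \<omega> ^ k - ((\<phi>^^n) z) ^ k) \<longlonglongrightarrow> \<omega> ^ k - \<omega> ^ k"
      by (intro tendsto_intros)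
    then show ?thesis unfolding h_def by simp
  qed
  have "(\<lambda>n. bergman_norm2 \<beta> (h n)) \<longlonglongrightarrow> 0" by (rule decay[OF b hh hb hl])
  then have "eventually (\<lambda>n. bergman_norm2 \<beta> (h n) < \<delta>) sequentially"
    using d by (intro order_tendstoD(2)) auto
  then obtain n where n: "bergman_norm2 \<beta> (h n) < \<delta>" unfolding eventually_sequentially by blast
  define g where "g z = (-1) * (\<Sum>j<n. ((\<phi>^^j) z) ^ k)" for z
  have "Hb g" unfolding g_def by (intro Hb_cmult Hb_sum Hb_iter_pow) auto
  moreover have "(\<lambda>z. (g (\<phi> z) - g z) - (z ^ k - \<omega> ^ k)) = h n"
  proof
    fix z
    have "(\<Sum>j<n. ((\<phi>^^j) (\<phi> z)) ^ k) - (\<Sum>j<n. ((\<phi>^^j) z) ^ k)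
        = (\<Sum>j<n. ((\<phi>^^Suc j) z) ^ k - ((\<phi>^^j) z) ^ k)"
      by (simp add: sum_subtractf funpow_Suc_right del: funpow.simps)
    also have "\<dots> = ((\<phi>^^n) z) ^ k - ((\<phi>^^0) z) ^ k"
      by (rule sum_lessThan_telescope)
    finally have "(\<Sum>j<n. ((\<phi>^^j) (\<phi> z)) ^ k) - (\<Sum>j<n. ((\<phi>^^j) z) ^ k) = ((\<phi>^^n) z) ^ k - z ^ k"
      by simp
    then show "(g (\<phi> z) - g z) - (z ^ k - \<omega> ^ k) = h n z"
      unfolding g_def h_def by (simp add: algebra_simps)
  qed
  ultimately show "\<exists>g. Hb g \<and> bergman_norm2 \<beta> (\<lambda>z. (g (\<phi> z) - g z) - (z ^ k - \<omega> ^ k)) < \<delta>"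
    using n by auto
qed

end

context
  fixes \<beta> :: real and \<phi> :: "complex \<Rightarrow> complex" and \<omega> :: complex
  assumes b: "\<beta> > -1"
    and hphi: "\<phi> holomorphic_on ball 0 1" and mphi: "\<phi> ` ball 0 1 \<subseteq> ball 0 1"
    and dw: "denjoy_wolff_point \<phi> \<omega>" and om: "cmod \<omega> = 1"
begin

lemma bs_mono: "(\<lambda>z. z ^ k - \<omega> ^ k) \<in> bergman_space \<beta>"
  by (intro Hb_bs[OF b] Hb_diff Hb_power Hb_const)

lemma apx_one: "apx \<beta> \<phi> (\<lambda>z. 1)"
proof (rule apx_closure[OF b hphi mphi])
  show "(\<lambda>z. 1) \<in> bergman_space \<beta>" by (intro Hb_bs[OF b] Hb_const)
  fix \<delta> :: real assume d: "\<delta> > 0"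
  obtain K :: nat where K: "1 / \<delta> < real K" using reals_Archimedean2 by blast
  have K0: "K > 0" using K d by (metis less_numeral_extra(3) of_nat_0 order_less_asym zero_less_divide_1_iff gr0I)
  define c where "c k = (cnj \<omega>) ^ k / of_nat K" for k
  define h' where "h' z = (\<Sum>k\<in>{1..K}. (- c k) * (z ^ k - \<omega> ^ k))" for z
  have "apx \<beta> \<phi> h' \<and> h' \<in> bergman_space \<beta>"
    unfolding h'_def[abs_def]
    by (intro conjI apx_sum[OF b hphi mphi] apx_cmult[OF b hphi mphi] apx_mono[OF b hphi mphi dw om]
        bs_cmult(1)[OF b] bs_mono finite_atLeastAtMost)
  moreover have "bergman_norm2 \<beta> (\<lambda>z. 1 - h' z) < \<delta>"
  proof -
    have cw: "(cnj \<omega>) ^ k * \<omega> ^ k = 1" for k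
    proof -
      have "cnj \<omega> * \<omega> = complex_of_real ((cmod \<omega>)\<^sup>2)" by (subst complex_norm_square) (rule mult.commute)
      then have "cnj \<omega> * \<omega> = 1" using om by simp
      then show ?thesis by (metis power_mult_distrib power_one)
    qed
    have eq: "(\<lambda>z. 1 - h' z) = (\<lambda>z. \<Sum>k\<in>{1..K}. c k * z ^ k)"
    proof
      fix z
      have "h' z = (\<Sum>k\<in>{1..K}. 1 / of_nat K - c k * z ^ k)"
        unfolding h'_def c_def
        by (intro sum.cong refl) (simp add: algebra_simps cw[unfolded mult.commute[of "cnj \<omega> ^ _"]] 
             flip: mult.assoc, simp add: field_simps cw)
      also have "\<dots> = 1 - (\<Sum>k\<in>{1..K}. c k * z ^ k)"
        using K0 by (simp add: sum_subtractf)
      finally show "1 - h' z = (\<Sum>k\<in>{1..K}. c k * z ^ k)" by simp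
    qed
    have tc: "taylor_coeff (\<lambda>z. \<Sum>k\<in>{1..K}. c k * z ^ k) m = (if m \<in> {1..K} then c m else 0)" for m
    proof -
      have "taylor_coeff (\<lambda>z. \<Sum>k\<in>{1..K}. c k * z ^ k) m = (\<Sum>k\<in>{1..K}. taylor_coeff (\<lambda>z. c k * z ^ k) m)"
        by (rule tc_sum) (auto intro!: holomorphic_intros)
      also have "\<dots> = (\<Sum>k\<in>{1..K}. c k * (if m = k then 1 else 0))"
        by (intro sum.cong refl) (simp add: tc_cmult[of "\<lambda>z. z ^ _"] holomorphic_intros tc_power)
      also have "\<dots> = (if m \<in> {1..K} then c m else 0)"
        by (simp add: if_distrib cong: if_cong)
      finally show ?thesis .
    qed
    have cn: "cmod (c k) = 1 / real K" for k
      unfolding c_def using om by (simp add: norm_divide norm_power)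
    have "bergman_norm2 \<beta> (\<lambda>z. 1 - h' z)
        = (\<Sum>m. bergman_weight \<beta> m * (cmod (if m \<in> {1..K} then c m else 0))\<^sup>2)"
      unfolding eq bergman_norm2_def tc ..
    also have "\<dots> = (\<Sum>m\<in>{1..K}. bergman_weight \<beta> m * (cmod (if m \<in> {1..K} then c m else 0))\<^sup>2)"
      by (rule suminf_finite) auto
    also have "\<dots> = (\<Sum>m\<in>{1..K}. bergman_weight \<beta> m * (1 / real K)\<^sup>2)"
      by (intro sum.cong refl) (simp add: cn)
    also have "\<dots> \<le> (\<Sum>m\<in>{1..K}. 1 * (1 / real K)\<^sup>2)"
      by (intro sum_mono mult_right_mono bw_le1[OF b]) auto
    also have "\<dots> = 1 / real K" using K0 by (simp add: power2_eq_square)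
    also have "\<dots> < \<delta>" using K d K0 by (simp add: field_simps)
    finally show ?thesis .
  qed
  ultimately show "\<exists>h'. h' \<in> bergman_space \<beta> \<and> apx \<beta> \<phi> h' \<and> bergman_norm2 \<beta> (\<lambda>z. 1 - h' z) < \<delta>"
    by blast
qed

lemma apx_poly: "apx \<beta> \<phi> (\<lambda>z. \<Sum>k<K. c k * z ^ k)"
proof -
  have bs1: "(\<lambda>z. 1) \<in> bergman_space \<beta>" by (intro Hb_bs[OF b] Hb_const)
  have "apx \<beta> \<phi> (\<lambda>z. \<Sum>k<K. c k * (z ^ k - \<omega> ^ k) + (c k * \<omega> ^ k) * 1)"
    by (intro apx_sum[OF b hphi mphi] apx_add[OF b hphi mphi] apx_cmult[OF b hphi mphi]
        apx_mono[OF b hphi mphi dw om] apx_one bs_add(1)[OF b] bs_cmult(1)[OF b] bs_mono bs1 finite_lessThan)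
  moreover have "(\<lambda>z. \<Sum>k<K. c k * (z ^ k - \<omega> ^ k) + (c k * \<omega> ^ k) * 1) = (\<lambda>z. \<Sum>k<K. c k * z ^ k)"
    by (simp add: algebra_simps)
  ultimately show ?thesis by simp
qed

lemma apx_general: assumes f: "f \<in> bergman_space \<beta>" shows "apx \<beta> \<phi> f"
proof (rule apx_closure[OF b hphi mphi f])
  fix \<delta> :: real assume d: "\<delta> > 0"
  have hf: "f holomorphic_on ball 0 1" using f by (rule bs_holo)
  define s where "s m = bergman_weight \<beta> m * (cmod (taylor_coeff f m))\<^sup>2" for m
  have ss: "summable s" using f unfolding bergman_space_def s_def by auto
  define p where "p K z = (\<Sum>k<K. taylor_coeff f k * z ^ k)" for K z
  have tcp: "taylor_coeff (p K) m = (if m < K then taylor_coeff f m else 0)" for K m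
  proof -
    have "taylor_coeff (p K) m = (\<Sum>k<K. taylor_coeff (\<lambda>z. taylor_coeff f k * z ^ k) m)"
      unfolding p_def by (rule tc_sum) (auto intro!: holomorphic_intros)
    also have "\<dots> = (\<Sum>k<K. taylor_coeff f k * (if m = k then 1 else 0))"
      by (intro sum.cong refl) (simp add: tc_cmult[of "\<lambda>z. z ^ _"] holomorphic_intros tc_power)
    also have "\<dots> = (if m < K then taylor_coeff f m else 0)"
      by (simp add: if_distrib cong: if_cong)
    finally show ?thesis .
  qed
  have hp: "p K holomorphic_on ball 0 1" for K unfolding p_def by (auto intro!: holomorphic_intros)
  have nrm: "bergman_norm2 \<beta> (\<lambda>z. f z - p K z) = suminf s - (\<Sum>m<K. s m)" for K
  proof -
    have "(\<lambda>m. bergman_weight \<beta> m * (cmod (taylor_coeff (\<lambda>z. f z - p K z) m))\<^sup>2)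
        = (\<lambda>m. s m - (if m \<in> {..<K} then s m else 0))"
      by (rule ext) (simp add: tc_diff[OF hf hp] tcp s_def)
    moreover have "(\<lambda>m. s m - (if m \<in> {..<K} then s m else 0)) sums (suminf s - (\<Sum>m<K. s m))"
      by (intro sums_diff summable_sums ss sums_If_finite_set finite_lessThan)
    ultimately show ?thesis unfolding bergman_norm2_def by (simp add: sums_iff)
  qed
  have "(\<lambda>K. suminf s - (\<Sum>m<K. s m)) \<longlonglongrightarrow> suminf s - suminf s"
    by (intro tendsto_diff tendsto_const summable_LIMSEQ ss)
  then have "eventually (\<lambda>K. suminf s - (\<Sum>m<K. s m) < \<delta>) sequentially"
    using d by (intro order_tendstoD(2)) auto
  then obtain K where K: "suminf s - (\<Sum>m<K. s m) < \<delta>" unfolding eventually_sequentially by blast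
  have "p K \<in> bergman_space \<beta>" unfolding p_def[abs_def]
    by (intro Hb_bs[OF b] Hb_sum Hb_cmult Hb_power finite_lessThan)
  moreover have "apx \<beta> \<phi> (p K)" unfolding p_def[abs_def] by (rule apx_poly)
  ultimately show "\<exists>h'. h' \<in> bergman_space \<beta> \<and> apx \<beta> \<phi> h' \<and> bergman_norm2 \<beta> (\<lambda>z. f z - h' z) < \<delta>"
    using K nrm[of K] by (intro exI[of _ "p K"]) simp
qed

end

theorem corollary2p4:
  fixes \<beta> :: real and \<phi> :: "complex \<Rightarrow> complex" and \<omega> :: complex
  assumes "\<beta> > -1"
    and "\<phi> holomorphic_on ball 0 1" and "\<phi> ` ball 0 1 \<subseteq> ball 0 1"
    and "denjoy_wolff_point \<phi> \<omega>" and "cmod \<omega> = 1"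
  shows "\<forall>f\<in>bergman_space \<beta>. \<forall>\<epsilon>>0. \<exists>g\<in>bergman_space \<beta>.
           bergman_norm2 \<beta> (\<lambda>z. (g (\<phi> z) - g z) - f z) < \<epsilon>"
proof (intro ballI allI impI)
  fix f and \<epsilon> :: real assume f: "f \<in> bergman_space \<beta>" and e: "\<epsilon> > 0"
  have "apx \<beta> \<phi> f" by (rule apx_general[OF assms f])
  then obtain g where "Hb g" "bergman_norm2 \<beta> (\<lambda>z. (g (\<phi> z) - g z) - f z) < \<epsilon>"
    using e unfolding apx_def[OF assms(1,2,3)] by blast
  then show "\<exists>g\<in>bergman_space \<beta>. bergman_norm2 \<beta> (\<lambda>z. (g (\<phi> z) - g z) - f z) < \<epsilon>"
    using Hb_bs[OF assms(1)] by blast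
qed

end
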